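(* Let $n\ge 1$, $k\ge 1$ be integers, let $\lambda\in\mathbb{F}_{2^n}^*$, and let $f:\mathbb{F}_{2^n}\to\mathbb{F}_2$ be given by $f(x)=Tr(\lambda x^{2^k+1})$. Then $f$ is negabent if and only if the polynomial $P(x)=\lambda^{2^{n-k}}x^{2^{n-k}}+\lambda x^{2^k}+x$ is a permutation polynomial of $\mathbb{F}_{2^n}$.
   Context: $Tr=Tr_1^n:\mathbb{F}_{2^n}\to\mathbb{F}_2$ is the absolute trace, $Tr(x)=x+x^2+\dots+x^{2^{n-1}}$. Fix a self-dual basis $\{\alpha_1,\dots,\alpha_n\}$ of $\mathbb{F}_{2^n}$ over $\mathbb{F}_2$ (i.e. $Tr(\alpha_i\alpha_j)=\delta_{ij}$) and identify $x=\sum x_i\alpha_i$ with $(x_1,\dots,x_n)\in\mathbb{F}_2^n$; let $wt(x)$ be the number of nonzero coordinates $x_i$. For $f:\mathbb{F}_{2^n}\to\mathbb{F}_2$ the nega-Hadamard transform is $\mathcal{N}_f(\mu)=2^{-n/2}\sum_{x}(-1)^{f(x)+Tr(\mu x)}\,\mathrm{i}^{wt(x)}$ with $\mathrm{i}=\sqrt{-1}$, and $f$ is negabent if $|\mathcal{N}_f(\mu)|=1$ for all $\mu\in\mathbb{F}_{2^n}$. *)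

theory Defs
  imports Complex_Main
begin

text \<open>The finite field with 2^n elements is modelled as a finite field type 'a
  with CARD('a) = 2^n. Elements of F_2 are represented as 0, 1 of 'a.\<close>

definition tr :: "nat \<Rightarrow> 'a::field \<Rightarrow> 'a" where
  "tr n x = (\<Sum>i<n. x ^ (2 ^ i))"

definition self_dual_basis :: "nat \<Rightarrow> (nat \<Rightarrow> 'a::field) \<Rightarrow> bool" where
  "self_dual_basis n \<alpha> \<longleftrightarrow>
     (\<forall>i<n. \<forall>j<n. tr n (\<alpha> i * \<alpha> j) = (if i = j then 1 else 0))"

definition coords :: "nat \<Rightarrow> (nat \<Rightarrow> 'a::field) \<Rightarrow> 'a \<Rightarrow> nat \<Rightarrow> bool" where
  "coords n \<alpha> x = (THE c. (\<forall>i\<ge>n. \<not> c i) \<and> x = (\<Sum>i<n. if c i then \<alpha> i else 0))"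

definition wt :: "nat \<Rightarrow> (nat \<Rightarrow> 'a::field) \<Rightarrow> 'a \<Rightarrow> nat" where
  "wt n \<alpha> x = card {i. i < n \<and> coords n \<alpha> x i}"

definition chi :: "'a::field \<Rightarrow> complex" where
  "chi y = (if y = 0 then 1 else -1)"

definition nega_hadamard ::
  "nat \<Rightarrow> (nat \<Rightarrow> 'a::{field,finite}) \<Rightarrow> ('a \<Rightarrow> 'a) \<Rightarrow> 'a \<Rightarrow> complex" where
  "nega_hadamard n \<alpha> f \<mu> =
     (1 / sqrt (2 ^ n)) * (\<Sum>x\<in>UNIV. chi (f x + tr n (\<mu> * x)) * \<i> ^ wt n \<alpha> x)"

definition negabent :: "nat \<Rightarrow> (nat \<Rightarrow> 'a::{field,finite}) \<Rightarrow> ('a \<Rightarrow> 'a) \<Rightarrow> bool" where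
  "negabent n \<alpha> f \<longleftrightarrow> (\<forall>\<mu>. cmod (nega_hadamard n \<alpha> f \<mu>) = 1)"

end

theory Submission
  imports Defs
begin

lemma i_card: assumes "finite A" "finite B"
  shows "\<i> ^ card A * cnj (\<i> ^ card ((A - B) \<union> (B - A))) = (-1) ^ card (A \<inter> B) * cnj (\<i> ^ card B)"
proof -
  let ?d = "card ((A - B) \<union> (B - A))" and ?r = "card (A \<inter> B)"
  have "card A + card B = card (A \<union> B) + ?r" using assms card_Un_Int by blast
  moreover have "card (A \<union> B) = ?d + ?r"
  proof -
    have "A \<union> B = ((A - B) \<union> (B - A)) \<union> (A \<inter> B)" by auto
    moreover have "((A - B) \<union> (B - A)) \<inter> (A \<inter> B) = {}" by auto
    ultimately show ?thesis using assms by (metis card_Un_disjoint finite_Int finite_Diff finite_Un)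
  qed
  ultimately have e: "card A + card B = ?d + 2 * ?r" by simp
  have c: "\<And>m. cnj (\<i> ^ m) = (-\<i>) ^ m" by simp
  have inv: "\<And>m. \<i> ^ m * (-\<i>) ^ m = 1" by (metis mult_minus_right i_squared minus_minus power_minus_mult power_mult_distrib power_one i_times_eq_iff)
  have "\<i> ^ card A = \<i> ^ card A * (\<i> ^ card B * (-\<i>) ^ card B)" using inv by simp
  also have "\<dots> = \<i> ^ (card A + card B) * (-\<i>) ^ card B" by (simp add: power_add)
  also have "\<dots> = \<i> ^ ?d * (-1) ^ ?r * (-\<i>) ^ card B" by (simp add: e power_add power_mult)
  finally have "\<i> ^ card A * (-\<i>) ^ ?d = (\<i> ^ ?d * (-\<i>) ^ ?d) * (-1) ^ ?r * (-\<i>) ^ card B"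
    by (simp add: algebra_simps)
  thus ?thesis using inv by (simp add: c)
qed


locale sdbf =
  fixes n :: nat and \<alpha> :: "nat \<Rightarrow> 'a::{field,finite}"
  assumes card: "card (UNIV :: 'a set) = 2 ^ n" and n1: "n \<ge> 1" and sdb: "self_dual_basis n \<alpha>"
begin

lemma sum_shift: "(\<Sum>x\<in>UNIV. g (x + c)) = (\<Sum>x\<in>(UNIV::'a set). g x)"
  by (rule sum.reindex_bij_witness[of _ "\<lambda>x. x - c" "\<lambda>x. x + c"]) auto

lemma char2: "(2::'a) = 0"
proof -
  have "(\<Sum>x\<in>UNIV. (x + 1::'a)) = (\<Sum>x\<in>UNIV. x)" by (rule sum_shift)
  hence "(\<Sum>x\<in>UNIV. x) + of_nat (card (UNIV :: 'a set)) = (\<Sum>x\<in>(UNIV::'a set). x)"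
    by (simp add: sum.distrib)
  hence "(of_nat (card (UNIV :: 'a set)) :: 'a) = 0" by simp
  hence "(2::'a) ^ n = 0" using card by simp
  thus ?thesis by simp
qed

lemma xx: "(x::'a) + x = 0"
proof -
  have "x + x = 2 * x" by simp
  thus ?thesis using char2 by simp
qed

lemma minus_eq_plus: "(x::'a) - y = x + y"
proof -
  have "x - y = x + y - (y + y)" by simp
  thus ?thesis using xx[of y] by simp
qed

lemma sq_add: "((x::'a) + y) ^ 2 = x ^ 2 + y ^ 2"
proof -
  have "(x + y)^2 = x^2 + y^2 + 2 * x * y" by (simp add: power2_sum)
  thus ?thesis using char2 by simp
qed

lemma pow2_add: "((x::'a) + y) ^ (2 ^ j) = x ^ (2 ^ j) + y ^ (2 ^ j)"
proof (induction j)
  case 0 then show ?case by simp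
next
  case (Suc j)
  have "(x + y) ^ (2 ^ Suc j) = ((x + y) ^ (2 ^ j)) ^ 2"
    by (simp add: power_mult[symmetric] mult.commute)
  also have "\<dots> = (x ^ (2 ^ j)) ^ 2 + (y ^ (2 ^ j)) ^ 2" using Suc sq_add by simp
  also have "\<dots> = x ^ (2 ^ Suc j) + y ^ (2 ^ Suc j)"
    by (simp add: power_mult[symmetric] mult.commute)
  finally show ?case .
qed

lemma pow2_sum: "(\<Sum>i\<in>I. g i :: 'a) ^ (2 ^ j) = (\<Sum>i\<in>I. g i ^ (2 ^ j))"
proof (cases "finite I")
  case True
  then show ?thesis by (induction I rule: finite_induct) (simp_all add: pow2_add)
next
  case False then show ?thesis by simp
qed

lemma fermat: "(x::'a) ^ (2 ^ n) = x"
proof (cases "x = 0")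
  case True then show ?thesis by simp
next
  case False
  let ?U = "UNIV - {0::'a}"
  have "(\<Prod>y\<in>?U. x * y) = (\<Prod>y\<in>?U. y)"
    by (rule prod.reindex_bij_witness[of _ "\<lambda>y. y / x" "\<lambda>y. x * y"]) (use False in auto)
  hence "x ^ card ?U * (\<Prod>y\<in>?U. y) = (\<Prod>y\<in>?U. y)"
    by (simp add: prod.distrib)
  moreover have "(\<Prod>y\<in>?U. y) \<noteq> 0" by simp
  ultimately have "x ^ card ?U = 1" by simp
  moreover have "card ?U = 2 ^ n - 1" using card by (simp add: card_Diff_singleton)
  ultimately have "x ^ (2 ^ n - 1) = 1" by simp
  hence "x ^ (2 ^ n - 1) * x = x" by simp
  moreover have "(2::nat) ^ n - 1 + 1 = 2 ^ n" by simp
  ultimately show ?thesis by (metis power_add power_one_right)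
qed

lemma fermat_mult: "(x::'a) ^ (2 ^ (j * n)) = x"
proof (induction j)
  case 0 then show ?case by simp
next
  case (Suc j)
  have "(2::nat) ^ (Suc j * n) = 2 ^ (j * n) * 2 ^ n" by (simp add: power_add)
  hence "x ^ (2 ^ (Suc j * n)) = (x ^ (2 ^ (j * n))) ^ (2 ^ n)" by (simp add: power_mult)
  then show ?case using Suc fermat by simp
qed

abbreviation "T \<equiv> tr n :: 'a \<Rightarrow> 'a"

lemma tr_add: "T (x + y) = T x + T y"
  unfolding tr_def by (simp add: pow2_add sum.distrib)

lemma tr_sum: "T (\<Sum>i\<in>I. g i) = (\<Sum>i\<in>I. T (g i))"
  unfolding tr_def by (simp add: pow2_sum sum.swap[of _ "{..<n}"])

lemma tr_zero: "T 0 = 0"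
  unfolding tr_def by (simp add: power_0_left)

lemma tr_sq: "T (x ^ 2) = T x"
proof -
  have "T (x ^ 2) = (\<Sum>i<n. x ^ (2 ^ Suc i))"
    unfolding tr_def by (simp add: power_mult[symmetric] mult.commute)
  also have "\<dots> = (\<Sum>i<Suc n. x ^ (2 ^ i)) - x ^ (2 ^ 0)"
    by (simp only: sum.lessThan_Suc_shift) simp
  also have "\<dots> = (\<Sum>i<n. x ^ (2 ^ i)) + x ^ (2 ^ n) - x"
    by simp
  also have "\<dots> = T x" using fermat unfolding tr_def by simp
  finally show ?thesis .
qed

lemma tr_pow2: "T (x ^ (2 ^ j)) = T x"
proof (induction j)
  case 0 then show ?case by simp
next
  case (Suc j)
  have "x ^ (2 ^ Suc j) = (x ^ (2 ^ j)) ^ 2" by (simp add: power_mult[symmetric] mult.commute)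
  then show ?case using Suc tr_sq by simp
qed

lemma tr_idem: "T x ^ 2 = T x"
proof -
  have "T x ^ 2 = (\<Sum>i<n. (x ^ (2 ^ i)) ^ 2)" unfolding tr_def
    using pow2_sum[of "\<lambda>i. x ^ (2 ^ i)" "{..<n}" 1] by simp
  also have "\<dots> = T (x ^ 2)" unfolding tr_def
    by (simp add: power_mult[symmetric] mult.commute)
  finally show ?thesis using tr_sq by simp
qed

lemma tr_01: "T x = 0 \<or> T x = 1"
proof -
  have "T x * (T x - 1) = 0" using tr_idem by (simp add: power2_eq_square algebra_simps)
  thus ?thesis by simp
qed


lemma one_ne_zero': "(1::'a) \<noteq> 0" by simp

definition psi :: "'a \<Rightarrow> complex" where "psi z = chi (T z)"

lemma psi_add: "psi (x + y) = psi x * psi y"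
  unfolding psi_def tr_add chi_def using tr_01[of x] tr_01[of y] xx[of 1] by auto

lemma psi_zero: "psi 0 = 1" unfolding psi_def chi_def tr_zero by simp

lemma psi_pm: "psi z = 1 \<or> psi z = -1" unfolding psi_def chi_def by auto

lemma cnj_psi: "cnj (psi z) = psi z" using psi_pm[of z] by auto

lemma alpha0: "T (\<alpha> 0 * \<alpha> 0) = 1"
  using sdb n1 unfolding self_dual_basis_def by auto

lemma psi_sum0: "(\<Sum>x\<in>UNIV. psi x) = 0"
proof -
  let ?z = "\<alpha> 0 * \<alpha> 0"
  have pz: "psi ?z = -1" unfolding psi_def chi_def using alpha0 by simp
  have "(\<Sum>x\<in>UNIV. psi x) = (\<Sum>x\<in>UNIV. psi (x + ?z))" by (rule sum_shift[symmetric])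
  also have "\<dots> = - (\<Sum>x\<in>UNIV. psi x)" by (simp add: psi_add pz sum_negf)
  finally show ?thesis by simp
qed

lemma psi_sum: "(\<Sum>x\<in>UNIV. psi (x * b)) = (if b = 0 then of_nat (2 ^ n) else 0)"
proof (cases "b = 0")
  case True then show ?thesis using card by (simp add: psi_zero)
next
  case False
  have "(\<Sum>x\<in>UNIV. psi (x * b)) = (\<Sum>x\<in>UNIV. psi x)"
    by (rule sum.reindex_bij_witness[of _ "\<lambda>x. x / b" "\<lambda>x. x * b"]) (use False in auto)
  then show ?thesis using False psi_sum0 by simp
qed

lemma chi_of_nat: "chi (of_nat m :: 'a) = (-1) ^ m"
proof -
  have m: "m = 2 * (m div 2) + m mod 2" by simp
  have "(of_nat m :: 'a) = 2 * of_nat (m div 2) + of_nat (m mod 2)"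
    by (subst m) (simp only: of_nat_add of_nat_mult of_nat_numeral)
  hence "(of_nat m :: 'a) = of_nat (m mod 2)" using char2 by simp
  moreover have "(-1::complex) ^ m = (-1) ^ (m mod 2)" by (simp add: power_minus1_even minus_one_power_iff)
  moreover have "m mod 2 = 0 \<or> m mod 2 = 1" by auto
  ultimately show ?thesis unfolding chi_def by auto
qed

definition S :: "'a \<Rightarrow> nat set" where "S x = {i. i < n \<and> T (\<alpha> i * x) = 1}"
definition R :: "nat set \<Rightarrow> 'a" where "R A = (\<Sum>i\<in>A. \<alpha> i)"

lemma S_sub: "S x \<subseteq> {..<n}" unfolding S_def by auto
lemma finite_S: "finite (S x)" using S_sub finite_subset by blast

lemma tr_R: assumes "A \<subseteq> {..<n}" "j < n"
  shows "T (\<alpha> j * R A) = (if j \<in> A then 1 else 0)"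
proof -
  have fA: "finite A" using assms(1) finite_subset by blast
  have "T (\<alpha> j * R A) = (\<Sum>i\<in>A. T (\<alpha> j * \<alpha> i))"
    unfolding R_def by (simp add: sum_distrib_left tr_sum)
  also have "\<dots> = (\<Sum>i\<in>A. if j = i then 1 else 0)"
    using assms sdb unfolding self_dual_basis_def by (intro sum.cong) auto
  also have "\<dots> = (if j \<in> A then 1 else 0)" using fA by simp
  finally show ?thesis .
qed

lemma S_R: assumes "A \<subseteq> {..<n}" shows "S (R A) = A"
  using tr_R[OF assms] assms one_ne_zero' unfolding S_def by (auto split: if_splits)

lemma R_surj: "R ` Pow {..<n} = UNIV"
proof -
  have "inj_on R (Pow {..<n})" by (rule inj_on_inverseI[of _ S]) (simp add: S_R)
  hence "card (R ` Pow {..<n}) = 2 ^ n" by (simp add: card_image card_Pow)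
  thus ?thesis using card by (intro card_subset_eq) auto
qed

lemma R_S: "R (S x) = x"
proof -
  obtain A where A: "A \<subseteq> {..<n}" "x = R A" using R_surj by (metis Pow_iff UNIV_I imageE)
  thus ?thesis using S_R by simp
qed

lemma coords_eq: "coords n \<alpha> x = (\<lambda>i. i \<in> S x)"
  unfolding coords_def
proof (rule the_equality)
  have "(\<Sum>i<n. if i \<in> S x then \<alpha> i else 0) = (\<Sum>i\<in>S x. \<alpha> i)"
    using S_sub by (simp add: sum.If_cases Int_absorb1)
  thus "(\<forall>i\<ge>n. i \<notin> S x) \<and> x = (\<Sum>i<n. if i \<in> S x then \<alpha> i else 0)"
    using S_sub R_S unfolding R_def by (auto simp: subset_iff) (meson not_le)
next
  fix c assume c: "(\<forall>i\<ge>n. \<not> c i) \<and> x = (\<Sum>i<n. if c i then \<alpha> i else 0)"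
  let ?C = "{i. i < n \<and> c i}"
  have "(\<Sum>i<n. if c i then \<alpha> i else 0) = (\<Sum>i\<in>{..<n} \<inter> {i. c i}. \<alpha> i)"
    by (simp add: sum.If_cases)
  also have "{..<n} \<inter> {i. c i} = ?C" by auto
  finally have "x = R ?C" using c unfolding R_def by simp
  hence "S x = ?C" using S_R[of ?C] by auto
  thus "c = (\<lambda>i. i \<in> S x)" using c by (auto simp: fun_eq_iff)
qed

lemma wt_eq: "wt n \<alpha> x = card (S x)"
proof -
  have "{i. i < n \<and> coords n \<alpha> x i} = S x" using S_sub by (auto simp: coords_eq)
  thus ?thesis unfolding wt_def by simp
qed

lemma S_add: "S (x + a) = (S x - S a) \<union> (S a - S x)"
proof -
  have "\<And>i. T (\<alpha> i * (x + a)) = T (\<alpha> i * x) + T (\<alpha> i * a)"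
    by (simp add: distrib_left tr_add)
  moreover have "\<And>u v::'a. (u = 0 \<or> u = 1) \<Longrightarrow> (v = 0 \<or> v = 1) \<Longrightarrow> (u + v = 1) = ((u = 1) \<noteq> (v = 1))"
    using xx[of 1] by auto
  ultimately show ?thesis unfolding S_def using tr_01 by auto
qed

lemma tr_mult_S: "T (x * a) = of_nat (card (S x \<inter> S a))"
proof -
  have "T (x * a) = (\<Sum>i\<in>S x. T (\<alpha> i * a))"
    by (subst R_S[symmetric, of x]) (simp add: R_def sum_distrib_right tr_sum)
  also have "\<dots> = (\<Sum>i\<in>S x. if i \<in> S a then 1 else 0)"
    using tr_01 S_sub unfolding S_def by (intro sum.cong) auto
  also have "\<dots> = of_nat (card (S x \<inter> S a))"
    using finite_S by (simp add: sum.If_cases)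
  finally show ?thesis .
qed

lemma psi_mult: "psi (x * a) = (-1) ^ card (S x \<inter> S a)"
  unfolding psi_def tr_mult_S chi_of_nat ..


context
  fixes k :: nat and lam :: 'a
begin

definition "mm = (n - k mod n) mod n"
definition "Pf a = lam ^ (2 ^ mm) * a ^ (2 ^ mm) + lam * a ^ (2 ^ k) + a"

lemma km: "\<exists>j. k + mm = j * n"
proof (cases "k mod n = 0")
  case True
  then have "mm = 0" unfolding mm_def by simp
  then show ?thesis using True by (metis add_0_right mult.commute mod_eq_0_iff_dvd dvd_def)
next
  case False
  have "k mod n < n" using n1 by simp
  then have "mm = n - k mod n" unfolding mm_def using False by simp
  then have "k + mm = (k div n + 1) * n" using \<open>k mod n < n\<close>
    by (metis add.commute add_diff_inverse_nat div_mult_mod_eq distrib_right mult_1 not_less add.assoc less_imp_le_nat)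
  then show ?thesis by blast
qed

lemma frob_km: "(y ^ (2 ^ k)) ^ (2 ^ mm) = (y::'a)"
proof -
  obtain j where j: "k + mm = j * n" using km by blast
  have "(y ^ (2 ^ k)) ^ (2 ^ mm) = y ^ (2 ^ (k + mm))" by (simp add: power_mult[symmetric] power_add)
  then show ?thesis using j fermat_mult by simp
qed

lemma tr_shift: "T (c * y ^ (2 ^ k)) = T (c ^ (2 ^ mm) * y)"
proof -
  have "T (c * y ^ (2 ^ k)) = T ((c * y ^ (2 ^ k)) ^ (2 ^ mm))" by (rule tr_pow2[symmetric])
  also have "\<dots> = T (c ^ (2 ^ mm) * y)" by (simp add: power_mult_distrib frob_km)
  finally show ?thesis .
qed

lemma key: "psi (lam * x ^ (2 ^ k + 1) + u * x) * psi (lam * (x + a) ^ (2 ^ k + 1) + u * (x + a)) * psi (x * a)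
   = psi (lam * a ^ (2 ^ k + 1) + u * a) * psi (x * Pf a)"
proof -
  let ?X = "x ^ (2 ^ k)" and ?Y = "a ^ (2 ^ k)"
  have e1: "x ^ (2 ^ k + 1) = ?X * x" "a ^ (2 ^ k + 1) = ?Y * a" by simp_all
  have e2: "(x + a) ^ (2 ^ k + 1) = (?X + ?Y) * (x + a)" by (simp add: pow2_add)
  let ?base = "lam * ?Y * x + lam * ?Y * a + u * a + x * a"
  have s1: "lam * x ^ (2 ^ k + 1) + u * x + (lam * (x + a) ^ (2 ^ k + 1) + u * (x + a)) + x * a
     = ?base + (lam * a) * ?X + 2 * (lam * ?X * x + u * x)"
    unfolding e1 e2 by (simp add: algebra_simps)
  have s2: "lam * a ^ (2 ^ k + 1) + u * a + x * Pf a = ?base + (lam * a) ^ (2 ^ mm) * x"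
    unfolding e1 Pf_def by (simp add: algebra_simps power_mult_distrib)
  have "T (lam * x ^ (2 ^ k + 1) + u * x + (lam * (x + a) ^ (2 ^ k + 1) + u * (x + a)) + x * a)
     = T (lam * a ^ (2 ^ k + 1) + u * a + x * Pf a)"
    unfolding s1 s2 using char2 by (simp add: tr_add tr_shift)
  then have "psi (lam * x ^ (2 ^ k + 1) + u * x + (lam * (x + a) ^ (2 ^ k + 1) + u * (x + a)) + x * a)
     = psi (lam * a ^ (2 ^ k + 1) + u * a + x * Pf a)" unfolding psi_def by simp
  then show ?thesis by (simp only: psi_add)
qed

lemma G: "nega_hadamard n \<alpha> (\<lambda>x. T (lam * x ^ (2 ^ k + 1))) u * cnj (nega_hadamard n \<alpha> (\<lambda>x. T (lam * x ^ (2 ^ k + 1))) u)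
  = (\<Sum>a\<in>UNIV. if Pf a = 0 then cnj (\<i> ^ card (S a)) * psi (lam * a ^ (2 ^ k + 1) + u * a) else 0)"
proof -
  define h where "h x = psi (lam * x ^ (2 ^ k + 1) + u * x) * \<i> ^ card (S x)" for x
  define s :: real where "s = 1 / sqrt (2 ^ n)"
  have N: "nega_hadamard n \<alpha> (\<lambda>x. T (lam * x ^ (2 ^ k + 1))) u = of_real s * (\<Sum>x\<in>UNIV. h x)"
    unfolding nega_hadamard_def h_def s_def wt_eq psi_def by (simp add: tr_add)
  have ss: "s * s * 2 ^ n = 1" unfolding s_def by (simp add: real_sqrt_mult[symmetric])
  have tm: "h x * cnj (h (x + a)) = cnj (\<i> ^ card (S a)) * psi (lam * a ^ (2 ^ k + 1) + u * a) * psi (x * Pf a)"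
    for x a
  proof -
    have "h x * cnj (h (x + a)) = psi (lam * x ^ (2 ^ k + 1) + u * x) * psi (lam * (x + a) ^ (2 ^ k + 1) + u * (x + a))
       * (\<i> ^ card (S x) * cnj (\<i> ^ card (S (x + a))))"
      unfolding h_def by (simp add: cnj_psi)
    also have "\<i> ^ card (S x) * cnj (\<i> ^ card (S (x + a))) = psi (x * a) * cnj (\<i> ^ card (S a))"
      unfolding S_add psi_mult using i_card finite_S by blast
    finally show ?thesis using key[of x u a] by (simp add: algebra_simps)
  qed
  have "(\<Sum>x\<in>UNIV. h x) * cnj (\<Sum>y\<in>UNIV. h y) = (\<Sum>x\<in>UNIV. \<Sum>y\<in>UNIV. h x * cnj (h y))"
    by (simp add: cnj_sum sum_product)
  also have "\<dots> = (\<Sum>x\<in>UNIV. \<Sum>a\<in>UNIV. h x * cnj (h (x + a)))"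
  proof (rule sum.cong[OF refl])
    fix x show "(\<Sum>y\<in>UNIV. h x * cnj (h y)) = (\<Sum>a\<in>UNIV. h x * cnj (h (x + a)))"
      using sum_shift[of "\<lambda>y. h x * cnj (h y)" x] by (simp add: add.commute)
  qed
  also have "\<dots> = (\<Sum>a\<in>UNIV. \<Sum>x\<in>UNIV. h x * cnj (h (x + a)))" by (rule sum.swap)
  also have "\<dots> = (\<Sum>a\<in>UNIV. cnj (\<i> ^ card (S a)) * psi (lam * a ^ (2 ^ k + 1) + u * a) * (\<Sum>x\<in>UNIV. psi (x * Pf a)))"
    by (simp add: tm sum_distrib_left)
  also have "\<dots> = (\<Sum>a\<in>UNIV. if Pf a = 0 then cnj (\<i> ^ card (S a)) * psi (lam * a ^ (2 ^ k + 1) + u * a) * 2 ^ n else 0)"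
    by (rule sum.cong[OF refl]) (simp add: psi_sum)
  also have "\<dots> = (\<Sum>a\<in>UNIV. if Pf a = 0 then cnj (\<i> ^ card (S a)) * psi (lam * a ^ (2 ^ k + 1) + u * a) else 0) * 2 ^ n"
    by (simp add: sum_distrib_right) (rule sum.cong[OF refl], simp)
  finally have "nega_hadamard n \<alpha> (\<lambda>x. T (lam * x ^ (2 ^ k + 1))) u * cnj (nega_hadamard n \<alpha> (\<lambda>x. T (lam * x ^ (2 ^ k + 1))) u)
     = of_real (s * s * 2 ^ n) * (\<Sum>a\<in>UNIV. if Pf a = 0 then cnj (\<i> ^ card (S a)) * psi (lam * a ^ (2 ^ k + 1) + u * a) else 0)"
    unfolding N by (simp add: algebra_simps)
  then show ?thesis using ss by simp
qed

end
end

theorem proposition3: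
  fixes n k :: nat and lam :: "'a::{field,finite}" and \<alpha> :: "nat \<Rightarrow> 'a"
  assumes "card (UNIV :: 'a set) = 2 ^ n" and "n \<ge> 1" and "k \<ge> 1"
    and "self_dual_basis n \<alpha>"
    and "lam \<noteq> 0"
  shows "negabent n \<alpha> (\<lambda>x. tr n (lam * x ^ (2 ^ k + 1)))
     \<longleftrightarrow> bij (\<lambda>x. lam ^ (2 ^ ((n - k mod n) mod n)) * x ^ (2 ^ ((n - k mod n) mod n))
                  + lam * x ^ (2 ^ k) + x)"
proof -
  interpret sdbf n \<alpha> using assms by unfold_locales auto
  let ?N = "nega_hadamard n \<alpha> (\<lambda>x. tr n (lam * x ^ (2 ^ k + 1)))"
  let ?P = "Pf k lam"
  define c where "c a = cnj (\<i> ^ card (S a))" for a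
  have PfE: "(\<lambda>x. lam ^ (2 ^ ((n - k mod n) mod n)) * x ^ (2 ^ ((n - k mod n) mod n))
                  + lam * x ^ (2 ^ k) + x) = ?P"
    by (simp add: fun_eq_iff Pf_def mm_def)
  have Padd: "?P (x + y) = ?P x + ?P y" for x y
    unfolding Pf_def by (simp add: pow2_add algebra_simps)
  have P0: "?P 0 = 0" unfolding Pf_def by (simp add: power_0_left)
  have GG: "?N u * cnj (?N u) = (\<Sum>a\<in>UNIV. if ?P a = 0 then c a * psi (lam * a ^ (2 ^ k + 1) + u * a) else 0)" for u
    using G[where k=k and lam=lam and u=u] unfolding c_def .
  have nrm: "?N u * cnj (?N u) = (complex_of_real (cmod (?N u))) ^ 2" for u
    by (simp only: complex_norm_square[symmetric] of_real_power)
  have S0: "S 0 = {}" unfolding S_def using tr_zero by simp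
  show ?thesis unfolding PfE negabent_def
  proof
    assume nb: "\<forall>\<mu>. cmod (?N \<mu>) = 1"
    show "bij ?P"
    proof (rule ccontr)
      assume "\<not> bij ?P"
      hence "\<not> inj ?P" using finite_UNIV_inj_surj bij_def by (metis finite)
      then obtain x y where xy: "x \<noteq> y" "?P x = ?P y" unfolding inj_def by blast
      define a0 where "a0 = x + y"
      have a0: "a0 \<noteq> 0" using xy minus_eq_plus[of x y] unfolding a0_def by (metis eq_iff_diff_eq_0)
      have Pa0: "?P a0 = 0" unfolding a0_def Padd using xy xx by simp
      have aa: "a + a0 = 0 \<longleftrightarrow> a = a0" for a using minus_eq_plus[of a a0] by (metis eq_iff_diff_eq_0)
      have "(\<Sum>u\<in>UNIV. ?N u * cnj (?N u) * psi (u * a0)) = (\<Sum>u\<in>UNIV. psi (u * a0))"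
        using nb by (intro sum.cong refl) (simp only: nrm, simp)
      also have "\<dots> = 0" using psi_sum a0 by simp
      finally have z: "(\<Sum>u\<in>UNIV. ?N u * cnj (?N u) * psi (u * a0)) = 0" .
      have "(\<Sum>u\<in>UNIV. ?N u * cnj (?N u) * psi (u * a0))
          = (\<Sum>u\<in>UNIV. \<Sum>a\<in>UNIV. if ?P a = 0 then c a * psi (lam * a ^ (2 ^ k + 1)) * psi (u * (a + a0)) else 0)"
        unfolding GG sum_distrib_right
        by (intro sum.cong refl) (simp add: psi_add distrib_left)
      also have "\<dots> = (\<Sum>a\<in>UNIV. if ?P a = 0 then c a * psi (lam * a ^ (2 ^ k + 1)) * (\<Sum>u\<in>UNIV. psi (u * (a + a0))) else 0)"
        by (subst sum.swap) (intro sum.cong refl, simp add: sum_distrib_left)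
      also have "\<dots> = (\<Sum>a\<in>UNIV. if a = a0 then c a0 * psi (lam * a0 ^ (2 ^ k + 1)) * of_nat (2 ^ n) else 0)"
        by (intro sum.cong refl) (auto simp: psi_sum aa Pa0 xx psi_zero card)
      also have "\<dots> = c a0 * psi (lam * a0 ^ (2 ^ k + 1)) * of_nat (2 ^ n)" by simp
      finally have "c a0 * psi (lam * a0 ^ (2 ^ k + 1)) * of_nat (2 ^ n) = 0" using z by simp
      moreover have "c a0 \<noteq> 0" unfolding c_def by simp
      moreover have "psi (lam * a0 ^ (2 ^ k + 1)) \<noteq> 0" using psi_pm by (metis zero_neq_neg_one zero_neq_one)
      ultimately show False by simp
    qed
  next
    assume b: "bij ?P"
    show "\<forall>\<mu>. cmod (?N \<mu>) = 1"
    proof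
      fix u
      have iff: "?P a = 0 \<longleftrightarrow> a = 0" for a using b P0 unfolding bij_def inj_def by metis
      have "?N u * cnj (?N u) = (\<Sum>a\<in>UNIV. if a = 0 then c a * psi (lam * a ^ (2 ^ k + 1) + u * a) else 0)"
        unfolding GG by (simp add: iff)
      also have "\<dots> = 1" by (simp add: c_def S0 psi_zero power_0_left)
      finally have "(complex_of_real (cmod (?N u))) ^ 2 = 1" using nrm by simp
      hence "cmod (?N u) ^ 2 = 1" by (metis of_real_eq_1_iff of_real_power)
      have r: "\<And>r::real. r ^ 2 = 1 \<Longrightarrow> r \<ge> 0 \<Longrightarrow> r = 1" by (auto simp: power2_eq_1_iff)
      show "cmod (?N u) = 1" by (rule r[OF \<open>cmod (?N u) ^ 2 = 1\<close> norm_ge_zero])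
    qed
  qed
qed

end
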